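(* Consider the structured private pooled-sequencing scheme with constant coverage depth described in the context, with $M\in\mathbb{N}$ unknown individuals, $M$ known individuals, base coverage $\alpha_0\in\mathbb{N}$, and per-read error probability $\eta\in(0,1/2)$. Let $\epsilon\in(0,1)$. If $$\frac{\alpha_0}{2^{M+1}-2}\geq\frac{8\eta(1-\eta)}{(1-2\eta)^2}\ln\left(\frac{1}{\epsilon}\right),$$ then the data collector can produce an estimate $\hat{\mathbf{X}}=\phi(\mathbf{Y},\mathcal{R})$ satisfying the reconstruction condition $\mathbb{P}(\hat{\mathbf{x}}_n\neq \mathbf{x}_n)\le\epsilon$ for every SNP position $n\in[N]$.
   Context: Setting. Each genome is described by $N$ SNP positions, each taking a binary value (0 = minor allele, 1 = major allele). There are $M$ "unknown" individuals indexed $m\in\{0,\dots,M-1\}$ whose SNPs form the matrix $\mathbf{X}\in\{0,1\}^{M\times N}$ with entries $X_{m,n}$ (unknown to everyone), and $K=M$ "known" individuals indexed $k\in\{0,\dots,M-1\}$ whose SNPs form $\mathbf{Y}\in\{0,1\}^{M\times N}$ with entries $Y_{k,n}$; $\mathbf{Y}$ is known to a trusted data collector but not to the sequencer, and its entries are i.i.d. uniform on $\{0,1\}$, independent of $\mathbf{X}$. Each genome is sheared into fragments; every fragment contains at most one SNP and can be mapped unambiguously to its SNP position. The data collector pools all fragments (without any label identifying the individual) and sends them to a sequencer, which reads each fragment and returns the set of reads $\mathcal{R}$; each read of a SNP is flipped ($0\leftrightarrow 1$) independently with probability $\eta$. In the structured scheme with constant coverage depth, for every SNP position $n$ the number of fragments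 covering position $n$ is exactly $2^m\alpha_0$ for unknown individual $m$ and exactly $2^k\alpha_0$ for known individual $k$, where $\alpha_0\in\mathbb{N}$. Thus for each position $n$ the reads reveal only the total count $\sum_{m}\sum_{i=1}^{2^m\alpha_0}(\tilde X_{m,n,i}+\tilde Y_{m,n,i})$ of read 1's, where $\tilde X_{m,n,i},\tilde Y_{m,n,i}$ are the noisy reads. As in the paper, the aggregated read noise is modeled via its central-limit (Gaussian) approximation: after normalization, the data collector observes $G_n=\sum_{m=0}^{M-1}2^mX_{m,n}+Z_n$ with $Z_n\sim\mathcal{N}(0,\sigma^2)$, $\sigma^2=\frac{2^{M+1}-2}{\alpha_0}\frac{\eta(1-\eta)}{(1-2\eta)^2}$. $\mathbf{x}_n$ and $\hat{\mathbf{x}}_n$ denote the $n$-th columns of $\mathbf{X}$ and $\hat{\mathbf{X}}$. *)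

theory Defs
  imports "HOL-Probability.Probability"
begin

text \<open>Variance of the Gaussian approximation of the normalized aggregated read noise
  in the structured scheme with constant coverage depth:
  sigma^2 = (2^(M+1) - 2)/alpha0 * eta(1-eta)/(1-2eta)^2.\<close>
definition noise_var :: "nat \<Rightarrow> nat \<Rightarrow> real \<Rightarrow> real" where
  "noise_var M alpha0 eta =
     (2 ^ (M + 1) - 2) / real alpha0 * (eta * (1 - eta) / (1 - 2 * eta)\<^sup>2)"

definition pooled_obs :: "nat \<Rightarrow> (nat \<Rightarrow> nat \<Rightarrow> nat) \<Rightarrow> (nat \<Rightarrow> 'a \<Rightarrow> real) \<Rightarrow> nat \<Rightarrow> 'a \<Rightarrow> real" where
  "pooled_obs M X Z n \<omega> = (\<Sum>m<M. 2 ^ m * real (X m n)) + Z n \<omega>"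

end

theory Submission
  imports Defs
begin

lemma digits_sum:
  fixes b :: "nat \<Rightarrow> nat"
  assumes "\<forall>m<M. b m \<in> {0, 1}" "m < M"
  shows "((\<Sum>i<M. 2 ^ i * b i) div 2 ^ m) mod 2 = b m"
  using assms
proof (induction M arbitrary: m)
  case 0 then show ?case by simp
next
  case (Suc M)
  have bnd: "(\<Sum>i<M. 2 ^ i * b i) < 2 ^ M" if "\<forall>m<M. b m \<in> {0, 1}" for M
    using that
  proof (induction M)
    case 0 then show ?case by simp
  next
    case (Suc M)
    have "b M \<le> 1" using Suc.prems by auto
    then have "2 ^ M * b M \<le> 2 ^ M" by simp
    moreover have "(\<Sum>i<M. 2 ^ i * b i) < 2 ^ M" using Suc by auto
    moreover have "(\<Sum>i<Suc M. 2 ^ i * b i) = (\<Sum>i<M. 2 ^ i * b i) + 2 ^ M * b M" by simp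
    moreover have "(2::nat) ^ Suc M = 2 ^ M + 2 ^ M" by simp
    ultimately show ?case by linarith
  qed
  define S where "S = (\<Sum>i<M. 2 ^ i * b i)"
  have S: "S < 2 ^ M" using bnd Suc.prems(1) unfolding S_def by auto
  have eq: "(\<Sum>i<Suc M. 2 ^ i * b i) = S + 2 ^ M * b M" by (simp add: S_def)
  show ?case
  proof (cases "m = M")
    case True
    have "(S + 2 ^ M * b M) div 2 ^ M = b M" using S by simp
    moreover have "b M \<le> 1" using Suc.prems by auto
    ultimately show ?thesis using True eq by auto
  next
    case False
    then have mM: "m < M" using Suc.prems by simp
    have "2 ^ M * b M = 2 ^ m * (2 * (2 ^ (M - m - 1) * b M))"
    proof -
      have "M = m + 1 + (M - m - 1)" using mM by simp
      then have "(2::nat) ^ M = 2 ^ m * 2 * 2 ^ (M - m - 1)" by (metis power_add power_one_right)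
      then show ?thesis by simp
    qed
    then have "(S + 2 ^ M * b M) div 2 ^ m = S div 2 ^ m + 2 * (2 ^ (M - m - 1) * b M)"
      by (metis div_mult_self2 add.commute power_not_zero zero_neq_numeral)
    then have "((S + 2 ^ M * b M) div 2 ^ m) mod 2 = (S div 2 ^ m) mod 2" by simp
    also have "\<dots> = b m" using Suc.IH[OF _ mM] Suc.prems unfolding S_def by auto
    finally show ?thesis using eq by simp
  qed
qed

lemma nd_shift:
  fixes v t u :: real
  assumes v: "v > 0" and "t * u \<ge> 0"
  shows "normal_density 0 (sqrt v) (t + u) \<le> exp (- t\<^sup>2 / (2 * v)) * normal_density 0 (sqrt v) u"
proof -
  define K where "K = 1 / sqrt (2 * pi * v)"
  have K: "K \<ge> 0" unfolding K_def using v by simp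
  have "- (t + u)\<^sup>2 / (2 * v) \<le> - t\<^sup>2 / (2 * v) + - u\<^sup>2 / (2 * v)"
  proof -
    have "- (t + u)\<^sup>2 \<le> - t\<^sup>2 - u\<^sup>2" using assms(2) by (simp add: power2_eq_square algebra_simps)
    then have "- (t + u)\<^sup>2 / (2 * v) \<le> (- t\<^sup>2 - u\<^sup>2) / (2 * v)"
      using v by (intro divide_right_mono) auto
    moreover have "(- t\<^sup>2 - u\<^sup>2) / (2 * v) = - t\<^sup>2 / (2 * v) + - u\<^sup>2 / (2 * v)"
      using v by (simp add: field_simps)
    ultimately show ?thesis by linarith
  qed
  then have "exp (- (t + u)\<^sup>2 / (2 * v)) \<le> exp (- t\<^sup>2 / (2 * v)) * exp (- u\<^sup>2 / (2 * v))"
    by (simp add: exp_add[symmetric])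
  then have "K * exp (- (t + u)\<^sup>2 / (2 * v)) \<le> exp (- t\<^sup>2 / (2 * v)) * (K * exp (- u\<^sup>2 / (2 * v)))"
    using K by (metis mult.left_commute mult_left_mono)
  then show ?thesis unfolding normal_density_def K_def using v by simp
qed

lemma gauss_tail:
  fixes v t :: real
  assumes v: "v > 0" and t: "t > 0"
  shows "(\<integral>\<^sup>+x. ennreal (normal_density 0 (sqrt v) x) * indicator ({..< -t} \<union> {t..}) x \<partial>lborel)
    \<le> ennreal (exp (- t\<^sup>2 / (2 * v))) * (\<integral>\<^sup>+x. ennreal (normal_density 0 (sqrt v) x) \<partial>lborel)"
proof -
  define f where "f = normal_density 0 (sqrt v)"
  define e where "e = exp (- t\<^sup>2 / (2 * v))"
  have fm[measurable]: "f \<in> borel_measurable borel" unfolding f_def normal_density_def by measurable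
  have ind: "(indicator ({..< -t} \<union> {t..}) x :: ennreal) = indicator {t..} x + indicator {..< -t} x" for x
    using t by (auto simp: indicator_def)
  have "(\<integral>\<^sup>+x. ennreal (f x) * indicator ({..< -t} \<union> {t..}) x \<partial>lborel)
      = (\<integral>\<^sup>+x. ennreal (f x) * indicator {t..} x + ennreal (f x) * indicator {..< -t} x \<partial>lborel)"
    by (simp add: ind distrib_left)
  also have "\<dots> = (\<integral>\<^sup>+x. ennreal (f x) * indicator {t..} x \<partial>lborel) + (\<integral>\<^sup>+x. ennreal (f x) * indicator {..< -t} x \<partial>lborel)"
    by (rule nn_integral_add) auto
  also have "(\<integral>\<^sup>+x. ennreal (f x) * indicator {t..} x \<partial>lborel) = (\<integral>\<^sup>+x. ennreal (f (t + x)) * indicator {t..} (t + x) \<partial>lborel)"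
    using nn_integral_real_affine[where c=1 and t=t and f="\<lambda>x. ennreal (f x) * indicator {t..} x"] by simp
  also have "\<dots> \<le> (\<integral>\<^sup>+x. ennreal e * (ennreal (f x) * indicator {0..} x) \<partial>lborel)"
  proof (rule nn_integral_mono)
    fix x :: real
    show "ennreal (f (t + x)) * indicator {t..} (t + x) \<le> ennreal e * (ennreal (f x) * indicator {0..} x)"
    proof (cases "x \<ge> 0")
      case True
      have "f (t + x) \<le> e * f x" unfolding f_def e_def using nd_shift[OF v, of t x] True t by simp
      then have "ennreal (f (t + x)) \<le> ennreal e * ennreal (f x)"
        using ennreal_mult[of e "f x"] normal_density_nonneg[of 0 "sqrt v"]
        by (metis e_def ennreal_leI exp_ge_zero f_def)
      then show ?thesis using True by (simp add: indicator_def)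
    qed (simp add: indicator_def)
  qed
  also have "(\<integral>\<^sup>+x. ennreal (f x) * indicator {..< -t} x \<partial>lborel) = (\<integral>\<^sup>+x. ennreal (f (-t + x)) * indicator {..< -t} (-t + x) \<partial>lborel)"
    using nn_integral_real_affine[where c=1 and t="-t" and f="\<lambda>x. ennreal (f x) * indicator {..< -t} x"] by simp
  also have "\<dots> \<le> (\<integral>\<^sup>+x. ennreal e * (ennreal (f x) * indicator {..<0} x) \<partial>lborel)"
  proof (rule nn_integral_mono)
    fix x :: real
    show "ennreal (f (-t + x)) * indicator {..< -t} (-t + x) \<le> ennreal e * (ennreal (f x) * indicator {..<0} x)"
    proof (cases "x < 0")
      case True
      have "(-t) * x \<ge> 0" using True t by (simp add: mult_pos_neg less_imp_le)
      then have "f (-t + x) \<le> e * f x" unfolding f_def e_def using nd_shift[OF v, of "-t" x] by simp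
      then have "ennreal (f (-t + x)) \<le> ennreal e * ennreal (f x)"
        using ennreal_mult[of e "f x"] normal_density_nonneg[of 0 "sqrt v"]
        by (metis e_def ennreal_leI exp_ge_zero f_def)
      then show ?thesis using True by (simp add: indicator_def)
    qed (simp add: indicator_def)
  qed
  also have "(\<integral>\<^sup>+x. ennreal e * (ennreal (f x) * indicator {0..} x) \<partial>lborel) + (\<integral>\<^sup>+x. ennreal e * (ennreal (f x) * indicator {..<0} x) \<partial>lborel)
      = (\<integral>\<^sup>+x. ennreal e * (ennreal (f x) * indicator {0..} x) + ennreal e * (ennreal (f x) * indicator {..<0} x) \<partial>lborel)"
    by (rule nn_integral_add[symmetric]) auto
  also have "\<dots> = (\<integral>\<^sup>+x. ennreal e * ennreal (f x) \<partial>lborel)"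
    by (rule nn_integral_cong) (auto simp: indicator_def)
  also have "\<dots> = ennreal e * (\<integral>\<^sup>+x. ennreal (f x) \<partial>lborel)"
    by (rule nn_integral_cmult) auto
  finally show ?thesis unfolding f_def e_def by (simp add: add_mono)
qed

theorem theorem1:
  fixes M N alpha0 :: nat and eta \<epsilon> :: real
  assumes eta: "0 < eta" "eta < 1/2"
    and eps: "0 < \<epsilon>" "\<epsilon> < 1"
    and cond: "real alpha0 / (2 ^ (M + 1) - 2)
                 \<ge> 8 * eta * (1 - eta) / (1 - 2 * eta)\<^sup>2 * ln (1 / \<epsilon>)"
  shows "\<exists>\<phi> :: (nat \<Rightarrow> real) \<Rightarrow> nat \<Rightarrow> nat \<Rightarrow> nat.
    \<forall>(P :: 'a measure) (Z :: nat \<Rightarrow> 'a \<Rightarrow> real) (X :: nat \<Rightarrow> nat \<Rightarrow> nat).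
      prob_space P
      \<longrightarrow> (\<forall>n<N. distributed P lborel (Z n) (normal_density 0 (sqrt (noise_var M alpha0 eta))))
      \<longrightarrow> prob_space.indep_vars P (\<lambda>_. borel) Z {..<N}
      \<longrightarrow> (\<forall>m<M. \<forall>n<N. X m n \<in> {0, 1})
      \<longrightarrow> (\<forall>n<N.
            let E = {\<omega> \<in> space P.
                       (\<exists>m<M. \<phi> (\<lambda>k. if k < N then pooled_obs M X Z k \<omega> else 0) m n \<noteq> X m n)}
            in E \<in> sets P \<and> measure P E \<le> \<epsilon>)"
proof -
  define r where "r = eta * (1 - eta) / (1 - 2 * eta)\<^sup>2"
  define D where "D = (2 ^ (M + 1) - 2 :: real)"
  define L where "L = ln (1 / \<epsilon>)"
  define v where "v = noise_var M alpha0 eta"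
  have r: "r > 0" unfolding r_def using eta by (intro divide_pos_pos mult_pos_pos) auto
  have L: "L > 0" unfolding L_def using eps by simp
  have c2: "real alpha0 / D \<ge> 8 * r * L" using cond unfolding r_def D_def L_def by (simp add: mult.assoc)
  have pos: "real alpha0 / D > 0" using c2 r L by (smt (verit) mult_pos_pos)
  have D0: "D \<ge> 0" unfolding D_def
  proof -
    have "(2::real) ^ (M + 1) \<ge> 2 ^ 1" by (rule power_increasing) auto
    then show "(2::real) ^ (M + 1) - 2 \<ge> 0" by simp
  qed
  have D: "D > 0" using pos D0 by (cases "D = 0") auto
  have a0: "real alpha0 > 0" using pos D by (simp add: zero_less_divide_iff)
  have vdef: "v = D / real alpha0 * r" unfolding v_def noise_var_def D_def r_def by simp
  have v: "v > 0" using vdef D a0 r by simp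
  have ve: "exp (- (1/2)\<^sup>2 / (2 * v)) \<le> \<epsilon>"
  proof -
    have "8 * r * L * (D / real alpha0) \<le> 1"
      using c2 D a0 by (simp add: field_simps)
    then have "8 * v * L \<le> 1" unfolding vdef by (simp add: algebra_simps)
    then have "L \<le> 1 / (8 * v)" using v by (simp add: field_simps)
    then have "- (1 / (8 * v)) \<le> ln \<epsilon>" unfolding L_def using eps by (simp add: ln_div)
    then have "exp (- (1 / (8 * v))) \<le> exp (ln \<epsilon>)" by simp
    moreover have "- (1/2)\<^sup>2 / (2 * v) = - (1 / (8 * v))" by (simp add: power2_eq_square field_simps)
    ultimately show ?thesis using eps by simp
  qed
  let ?\<phi> = "\<lambda>(g :: nat \<Rightarrow> real) m n. (nat \<lfloor>g n + 1/2\<rfloor> div 2 ^ m) mod 2"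
  show ?thesis
  proof (rule exI[of _ ?\<phi>], (rule allI)+, (rule impI)+)
    fix P :: "'a measure" and Z :: "nat \<Rightarrow> 'a \<Rightarrow> real" and X :: "nat \<Rightarrow> nat \<Rightarrow> nat"
    assume ps: "prob_space P"
      and dist: "\<forall>n<N. distributed P lborel (Z n) (normal_density 0 (sqrt (noise_var M alpha0 eta)))"
      and indep: "prob_space.indep_vars P (\<lambda>_. borel) Z {..<N}"
      and bits: "\<forall>m<M. \<forall>n<N. X m n \<in> {0, 1}"
    show "\<forall>n<N.
            let E = {\<omega> \<in> space P.
                       (\<exists>m<M. ?\<phi> (\<lambda>k. if k < N then pooled_obs M X Z k \<omega> else 0) m n \<noteq> X m n)}
            in E \<in> sets P \<and> measure P E \<le> \<epsilon>"
    proof (intro allI impI)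
      fix n assume n: "n < N"
      have dn: "distributed P lborel (Z n) (normal_density 0 (sqrt v))" using dist n unfolding v_def by auto
      have Zm[measurable]: "Z n \<in> borel_measurable P" using distributed_measurable[OF dn] by simp
      define cn where "cn = (\<Sum>m<M. 2 ^ m * X m n)"
      have cn: "(\<Sum>m<M. 2 ^ m * real (X m n)) = real cn" unfolding cn_def by simp
      define Q where "Q = (\<lambda>k::int. \<exists>m<M. (nat k div 2 ^ m) mod 2 \<noteq> X m n)"
      define E where "E = {\<omega> \<in> space P.
                       (\<exists>m<M. ?\<phi> (\<lambda>k. if k < N then pooled_obs M X Z k \<omega> else 0) m n \<noteq> X m n)}"
      have Eeq: "E = (\<lambda>\<omega>. \<lfloor>real cn + Z n \<omega> + 1/2\<rfloor>) -` {k. Q k} \<inter> space P"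
        unfolding E_def Q_def using n by (auto simp: pooled_obs_def cn)
      have gm: "(\<lambda>\<omega>. \<lfloor>real cn + Z n \<omega> + 1/2\<rfloor>) \<in> P \<rightarrow>\<^sub>M count_space UNIV" by measurable
      have Es: "E \<in> sets P" unfolding Eeq by (rule measurable_sets[OF gm]) simp
      define A where "A = ({..< -(1/2)} \<union> {1/2..} :: real set)"
      have As: "Z n -` A \<inter> space P \<in> sets P" unfolding A_def by measurable
      have sub: "E \<subseteq> Z n -` A \<inter> space P"
      proof
        fix \<omega> assume w: "\<omega> \<in> E"
        show "\<omega> \<in> Z n -` A \<inter> space P"
        proof (rule ccontr)
          assume "\<omega> \<notin> Z n -` A \<inter> space P"
          then have z: "- (1/2) \<le> Z n \<omega>" "Z n \<omega> < 1/2" using w Eeq unfolding A_def by auto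
          have "\<lfloor>real cn + Z n \<omega> + 1/2\<rfloor> = int cn" using z by (intro floor_unique) auto
          moreover have "\<not> Q (int cn)"
          proof -
            have "\<forall>m<M. (cn div 2 ^ m) mod 2 = X m n" unfolding cn_def using digits_sum[of M "\<lambda>m. X m n"] bits n by auto
            then show ?thesis unfolding Q_def by (simp only: nat_int) auto
          qed
          ultimately show False using w Eeq by auto
        qed
      qed
      interpret prob_space P by (rule ps)
      have "measure P E \<le> measure P (Z n -` A \<inter> space P)" using sub As by (rule finite_measure_mono)
      also have "\<dots> \<le> exp (- (1/2)\<^sup>2 / (2 * v))"
      proof -
        have "ennreal (measure P (Z n -` A \<inter> space P)) = emeasure P (Z n -` A \<inter> space P)"
          using emeasure_eq_measure by simp
        also have "\<dots> = (\<integral>\<^sup>+x. ennreal (normal_density 0 (sqrt v) x) * indicator A x \<partial>lborel)"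
          by (rule distributed_emeasure[OF dn]) (simp add: A_def)
        also have "\<dots> \<le> ennreal (exp (- (1/2)\<^sup>2 / (2 * v))) * (\<integral>\<^sup>+x. ennreal (normal_density 0 (sqrt v) x) \<partial>lborel)"
          unfolding A_def by (rule gauss_tail[OF v]) simp
        also have "(\<integral>\<^sup>+x. ennreal (normal_density 0 (sqrt v) x) \<partial>lborel) = 1"
        proof -
          have "emeasure P (Z n -` UNIV \<inter> space P) = (\<integral>\<^sup>+x. ennreal (normal_density 0 (sqrt v) x) * indicator UNIV x \<partial>lborel)"
            by (rule distributed_emeasure[OF dn]) simp
          then show ?thesis by (simp add: emeasure_space_1)
        qed
        finally show ?thesis by (simp add: ennreal_le_iff)
      qed
      also have "\<dots> \<le> \<epsilon>" by (rule ve)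
      finally have mE: "measure P E \<le> \<epsilon>" .
      show "let E = {\<omega> \<in> space P.
                       (\<exists>m<M. ?\<phi> (\<lambda>k. if k < N then pooled_obs M X Z k \<omega> else 0) m n \<noteq> X m n)}
            in E \<in> sets P \<and> measure P E \<le> \<epsilon>" using Es mE unfolding E_def Let_def by (rule conjI)
    qed
  qed
qed

end
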